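(* Let $c>0$, let $\widetilde{\theta_c}$ be as in the context, and let $X:\mathbb{C}\to\widetilde{E(2)}$ be the map described in the context with $\theta=\widetilde{\theta_c}$. Then there exists $Z\in\mathbb{C}\setminus\{0\}$ such that $X(z+Z)=X(z)$ for all $z\in\mathbb{C}$.
   Context: $\widetilde{E(2)}$ is $\mathbb{R}^3$ with coordinates $(x_1,x_2,x_3)$ and group law $(a_1,b_1,c_1)*(a_2,b_2,c_2)=(a_1+a_2\cos c_1-b_2\sin c_1,\ b_1+a_2\sin c_1+b_2\cos c_1,\ c_1+c_2)$, with the left-invariant metric $\lambda_1^2(\cos x_3\,dx_1+\sin x_3\,dx_2)^2+\lambda_2^2(-\sin x_3\,dx_1+\cos x_3\,dx_2)^2+\frac{1}{\lambda_1^2\lambda_2^2}dx_3^2$, where either $\lambda_1>\lambda_2>0$ or $\lambda_1=\lambda_2=1$. For $c>0$: $\theta_c^+=\pi$ if $c>\sqrt2\lambda_1$, $\theta_c^+=\arccos(1-c^2/\lambda_1^2)$ if $0<c\le\sqrt2\lambda_1$; $\Omega=\{(c,\theta):c>0,\ |\theta|<\theta_c^+\}$. For $(c,\theta)\in\Omega$: $D=\sin\theta/c$; $\varphi$ is the global solution of $\varphi'(u)=\sqrt{c^2+2\cos\theta\,B(u)-D^2B(u)^2}$, $\varphi(0)=0$, with $B(u)=\lambda_1^2\cos^2\varphi(u)+\lambda_2^2\sin^2\varphi(u)$ ($\varphi$ is an increasing bijection of $\mathbb{R}$); $U>0$ is the unique number with $\varphi(U)=\pi$; $f$ solves $f'=DB$,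 $f(0)=0$; $G(u)=\int_0^u\frac{c-\varphi'(s)}{B(s)}ds$; $H(c,\theta)=Df(U)+cG(U)$. For each $c>0$, $\widetilde{\theta_c}$ denotes the unique $\theta\in(0,\pi/2)\cap(0,\theta_c^+)$ with $H(c,\theta)=0$. The map $X=(x_1,x_2,x_3)$ is: $x_3(u+iv)=-\lambda_1\lambda_2Dv+\lambda_1\lambda_2G(u)$; with $A=f(u)+cv$, $M_1=c\cos x_3\cosh A-\lambda_1\lambda_2D\sin x_3\sinh A$, $M_2=c\cos x_3\sinh A-\lambda_1\lambda_2D\sin x_3\cosh A$, $M_3=c\sin x_3\sinh A+\lambda_1\lambda_2D\cos x_3\cosh A$, $M_4=c\sin x_3\cosh A+\lambda_1\lambda_2D\cos x_3\sinh A$, $x_1=-\frac{1}{(c^2+\lambda_1^2\lambda_2^2D^2)B}[\frac{1}{\lambda_1}f'\cos\varphi\,M_1-\frac{1}{\lambda_1}(c-\varphi')\sin\varphi\,M_2-\frac{1}{\lambda_2}(c-\varphi')\cos\varphi\,M_3-\frac{1}{\lambda_2}f'\sin\varphi\,M_4]$, $x_2=-\frac{1}{(c^2+\lambda_1^2\lambda_2^2D^2)B}[\frac{1}{\lambda_1}f'\cos\varphi\,M_4-\frac{1}{\lambda_1}(c-\varphi')\sin\varphi\,M_3+\frac{1}{\lambda_2}(c-\varphi')\cos\varphi\,M_2+\frac{1}{\lambda_2}f'\sin\varphi\,M_1]$, all functions of $u$ evaluated at $u$. (It is a conformal minimal immersion.) *)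

theory Defs
  imports "HOL-Analysis.Analysis"
begin

definition Bfun :: "real \<Rightarrow> real \<Rightarrow> real \<Rightarrow> real" where
  "Bfun l1 l2 p = l1^2 * (cos p)^2 + l2^2 * (sin p)^2"

definition Dc :: "real \<Rightarrow> real \<Rightarrow> real" where
  "Dc c \<theta> = sin \<theta> / c"

definition theta_plus :: "real \<Rightarrow> real \<Rightarrow> real" where
  "theta_plus l1 c = (if c > sqrt 2 * l1 then pi else arccos (1 - c^2 / l1^2))"

definition in_Omega :: "real \<Rightarrow> real \<Rightarrow> real \<Rightarrow> bool" where
  "in_Omega l1 c \<theta> \<longleftrightarrow> c > 0 \<and> \<bar>\<theta>\<bar> < theta_plus l1 c"

definition phirhs :: "real \<Rightarrow> real \<Rightarrow> real \<Rightarrow> real \<Rightarrow> real \<Rightarrow> real" where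
  "phirhs l1 l2 c \<theta> p =
     sqrt (c^2 + 2 * cos \<theta> * Bfun l1 l2 p - (Dc c \<theta>)^2 * (Bfun l1 l2 p)^2)"

definition phi :: "real \<Rightarrow> real \<Rightarrow> real \<Rightarrow> real \<Rightarrow> real \<Rightarrow> real" where
  "phi l1 l2 c \<theta> = (THE \<phi>. \<phi> 0 = 0 \<and>
      (\<forall>u. (\<phi> has_real_derivative phirhs l1 l2 c \<theta> (\<phi> u)) (at u)))"

definition dphi :: "real \<Rightarrow> real \<Rightarrow> real \<Rightarrow> real \<Rightarrow> real \<Rightarrow> real" where
  "dphi l1 l2 c \<theta> u = phirhs l1 l2 c \<theta> (phi l1 l2 c \<theta> u)"

definition Bu :: "real \<Rightarrow> real \<Rightarrow> real \<Rightarrow> real \<Rightarrow> real \<Rightarrow> real" where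
  "Bu l1 l2 c \<theta> u = Bfun l1 l2 (phi l1 l2 c \<theta> u)"

definition Uper :: "real \<Rightarrow> real \<Rightarrow> real \<Rightarrow> real \<Rightarrow> real" where
  "Uper l1 l2 c \<theta> = (THE U. U > 0 \<and> phi l1 l2 c \<theta> U = pi)"

definition ffun :: "real \<Rightarrow> real \<Rightarrow> real \<Rightarrow> real \<Rightarrow> real \<Rightarrow> real" where
  "ffun l1 l2 c \<theta> = (THE g. g 0 = 0 \<and>
      (\<forall>u. (g has_real_derivative Dc c \<theta> * Bu l1 l2 c \<theta> u) (at u)))"

definition Gfun :: "real \<Rightarrow> real \<Rightarrow> real \<Rightarrow> real \<Rightarrow> real \<Rightarrow> real" where
  "Gfun l1 l2 c \<theta> u = interval_lebesgue_integral lborel (ereal 0) (ereal u)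
      (\<lambda>s. (c - dphi l1 l2 c \<theta> s) / Bu l1 l2 c \<theta> s)"

definition Hfun :: "real \<Rightarrow> real \<Rightarrow> real \<Rightarrow> real \<Rightarrow> real" where
  "Hfun l1 l2 c \<theta> = Dc c \<theta> * ffun l1 l2 c \<theta> (Uper l1 l2 c \<theta>)
                     + c * Gfun l1 l2 c \<theta> (Uper l1 l2 c \<theta>)"

definition theta_tilde :: "real \<Rightarrow> real \<Rightarrow> real \<Rightarrow> real" where
  "theta_tilde l1 l2 c = (THE \<theta>. 0 < \<theta> \<and> \<theta> < pi / 2 \<and> \<theta> < theta_plus l1 c
                              \<and> Hfun l1 l2 c \<theta> = 0)"

text \<open>The conformal minimal immersion X : C -> E(2)~ = R^3, z = u + i v.\<close>
definition Xmap :: "real \<Rightarrow> real \<Rightarrow> real \<Rightarrow> real \<Rightarrow> complex \<Rightarrow> real \<times> real \<times> real" where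
  "Xmap l1 l2 c \<theta> z =
    (let u = Re z; v = Im z;
         D = Dc c \<theta>;
         B = Bu l1 l2 c \<theta> u;
         p = phi l1 l2 c \<theta> u;
         dp = dphi l1 l2 c \<theta> u;
         df = D * B;
         x3 = - l1 * l2 * D * v + l1 * l2 * Gfun l1 l2 c \<theta> u;
         A = ffun l1 l2 c \<theta> u + c * v;
         M1 = c * cos x3 * cosh A - l1 * l2 * D * sin x3 * sinh A;
         M2 = c * cos x3 * sinh A - l1 * l2 * D * sin x3 * cosh A;
         M3 = c * sin x3 * sinh A + l1 * l2 * D * cos x3 * cosh A;
         M4 = c * sin x3 * cosh A + l1 * l2 * D * cos x3 * sinh A;
         K = (c^2 + l1^2 * l2^2 * D^2) * B;
         x1 = - (1 / K) * ((1 / l1) * df * cos p * M1 - (1 / l1) * (c - dp) * sin p * M2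
                          - (1 / l2) * (c - dp) * cos p * M3 - (1 / l2) * df * sin p * M4);
         x2 = - (1 / K) * ((1 / l1) * df * cos p * M4 - (1 / l1) * (c - dp) * sin p * M3
                          + (1 / l2) * (c - dp) * cos p * M2 + (1 / l2) * df * sin p * M1)
     in (x1, x2, x3))"

end

theory Submission
  imports Defs
begin

lemma lbint_deriv:
  fixes h :: "real \<Rightarrow> real"
  assumes "continuous_on UNIV h"
  shows "((\<lambda>x. LBINT t=ereal 0..ereal x. h t) has_real_derivative h x) (at x)"
proof -
  define a where "a = -(\<bar>x\<bar>+1)"
  define b where "b = \<bar>x\<bar>+1"
  have "((\<lambda>u. LBINT y=ereal 0..ereal u. h y) has_vector_derivative (h x)) (at x within {a..b})"
    by (rule interval_integral_FTC2) (auto simp: a_def b_def intro: continuous_on_subset[OF assms])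
  then have "((\<lambda>u. LBINT y=ereal 0..ereal u. h y) has_vector_derivative (h x)) (at x within {a<..<b})"
    by (rule has_vector_derivative_within_subset) auto
  then have "((\<lambda>u. LBINT y=ereal 0..ereal u. h y) has_vector_derivative (h x)) (at x)"
    by (subst (asm) has_vector_derivative_within_open) (auto simp: a_def b_def)
  then show ?thesis by (simp add: has_real_derivative_iff_has_vector_derivative)
qed

lemma deriv_unique:
  fixes f g :: "real \<Rightarrow> real"
  assumes "\<And>x. (f has_real_derivative h x) (at x)" "\<And>x. (g has_real_derivative h x) (at x)"
    and "f 0 = g 0"
  shows "f x = g x"
proof -
  have "\<forall>x. ((\<lambda>x. f x - g x) has_real_derivative 0) (at x)"
    using DERIV_diff[OF assms(1) assms(2)] by fastforce
  from DERIV_isconst_all[OF this, of x 0] assms(3) show ?thesis by simp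
qed

lemma Bfun_bounds: assumes "0 < l2" "l2 \<le> l1"
  shows "l2^2 \<le> Bfun l1 l2 p" "Bfun l1 l2 p \<le> l1^2" "Bfun l1 l2 p = l1^2 - (l1^2 - l2^2) * (sin p)^2"
proof -
  have e: "Bfun l1 l2 p = l1^2 - (l1^2 - l2^2) * (sin p)^2"
    unfolding Bfun_def using sin_cos_squared_add[of p] by algebra
  have "l2^2 \<le> l1^2" using assms by (simp add: power_mono)
  moreover have "(sin p)^2 \<le> 1" using sin_cos_squared_add[of p] by (smt (verit) zero_le_power2) 
  moreover have "0 \<le> (sin p)^2" by simp
  ultimately have "0 \<le> (l1^2 - l2^2) * (sin p)^2" "(l1^2 - l2^2) * (sin p)^2 \<le> (l1^2 - l2^2)"
    by (auto intro: mult_left_le)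
  then show "l2^2 \<le> Bfun l1 l2 p" "Bfun l1 l2 p \<le> l1^2" unfolding e by linarith+
  show "Bfun l1 l2 p = l1^2 - (l1^2 - l2^2) * (sin p)^2" by (fact e)
qed

lemma Bfun_per: "Bfun l1 l2 (p + pi) = Bfun l1 l2 p"
  by (simp add: Bfun_def)

lemma Bfun_cont: "continuous_on S (Bfun l1 l2)"
  unfolding Bfun_def by (intro continuous_intros)

lemma mono_by_deriv:
  fixes f :: "real \<Rightarrow> real"
  assumes "a \<le> b" "\<And>x. (f has_real_derivative f' x) (at x)" "\<And>x. f' x \<ge> 0"
  shows "f a \<le> f b"
proof (rule DERIV_nonneg_imp_increasing_open[OF assms(1)])
  show "\<exists>y. DERIV f x :> y \<and> y \<ge> 0" for x using assms by blast
  show "continuous_on {a..b} f"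
    using assms(2) by (intro continuous_at_imp_continuous_on ballI) (meson DERIV_continuous)
qed

definition Fint :: "real \<Rightarrow> real \<Rightarrow> real \<Rightarrow> real \<Rightarrow> real \<Rightarrow> real" where
  "Fint l1 l2 c th p = (Dc c th)^2 * Bfun l1 l2 p / phirhs l1 l2 c th p
      + c * ((c / phirhs l1 l2 c th p - 1) / Bfun l1 l2 p)"

locale good =
  fixes l1 l2 c th :: real
  assumes l2pos: "0 < l2" and l12: "l2 \<le> l1" and cpos: "0 < c"
    and thc: "1 - c^2/l1^2 < cos th"
begin

abbreviation "B \<equiv> Bfun l1 l2"
abbreviation "g \<equiv> phirhs l1 l2 c th"

definition "eps0 = c^2 - (1 - cos th) * l1^2"
definition "Gm = sqrt (c^2 + 2 * l1^2)"

lemma l1pos: "0 < l1" using l2pos l12 by linarith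

lemma eps0_pos: "0 < eps0"
proof -
  have "l1^2 > 0" using l1pos by simp
  then have "(1 - c^2/l1^2) * l1^2 < cos th * l1^2" using thc by simp
  then show ?thesis unfolding eps0_def using \<open>l1^2 > 0\<close> by (simp add: algebra_simps)
qed

lemma B_low: "l2^2 \<le> B p" and B_up: "B p \<le> l1^2"
  using Bfun_bounds[OF l2pos l12, of p] by auto

lemma B_pos: "0 < B p"
proof -
  have "0 < l2^2" using l2pos by simp
  then show ?thesis using B_low[of p] by linarith
qed

lemma W_fact: "c^2 * (c^2 + 2 * cos th * B p - (Dc c th)^2 * (B p)^2)
   = (c^2 - (1 - cos th) * B p) * (c^2 + (1 + cos th) * B p)"
proof -
  have "sin th ^2 = 1 - cos th ^2" by (simp add: sin_squared_eq)
  then have e: "(Dc c th)^2 = (1 - cos th ^2) / c^2" using cpos by (simp add: Dc_def power_divide)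
  show ?thesis unfolding e using cpos by (simp add: field_simps) (simp add: algebra_simps power2_eq_square)
qed

lemma W_low: "eps0 \<le> c^2 + 2 * cos th * B p - (Dc c th)^2 * (B p)^2"
proof -
  have c1: "cos th \<le> 1" "-1 \<le> cos th" by simp_all
  have a: "eps0 \<le> c^2 - (1 - cos th) * B p"
    unfolding eps0_def using B_up[of p] c1 by (simp add: mult_left_mono)
  have "0 \<le> (1 + cos th) * B p" using B_pos[of p] c1(2) by (intro mult_nonneg_nonneg) linarith+
  then have b: "c^2 \<le> c^2 + (1 + cos th) * B p" by simp
  have a0: "0 \<le> c^2 - (1 - cos th) * B p" using a eps0_pos by linarith
  have "eps0 * c^2 \<le> (c^2 - (1 - cos th) * B p) * (c^2 + (1 + cos th) * B p)"
    by (rule mult_mono[OF a b a0]) simp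
  then have "c^2 * eps0 \<le> c^2 * (c^2 + 2 * cos th * B p - (Dc c th)^2 * (B p)^2)"
    unfolding W_fact by (simp add: mult.commute)
  moreover have "0 < c^2" using cpos by simp
  ultimately show ?thesis by (rule mult_left_le_imp_le)
qed

lemma W_up: "c^2 + 2 * cos th * B p - (Dc c th)^2 * (B p)^2 \<le> c^2 + 2 * l1^2"
proof -
  have "cos th * B p \<le> 1 * l1^2" using B_up[of p] B_pos[of p] 
    by (intro mult_mono) auto
  moreover have "0 \<le> (Dc c th)^2 * (B p)^2" by simp
  ultimately show ?thesis by linarith
qed

lemma g_low: "sqrt eps0 \<le> g p" and g_pos: "0 < g p" and g_up: "g p \<le> Gm"
proof -
  show "sqrt eps0 \<le> g p" unfolding phirhs_def using W_low[of p] by simp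
  then show "0 < g p" using eps0_pos by (meson less_le_trans real_sqrt_gt_zero)
  show "g p \<le> Gm" unfolding phirhs_def Gm_def using W_up[of p] by simp
qed

lemma Gm_pos: "0 < Gm" using g_pos[of 0] g_up[of 0] by linarith

lemma g_ne [simp]: "g p \<noteq> 0" using g_pos[of p] by linarith

lemma g_cont: "continuous_on S g"
  unfolding phirhs_def Bfun_def by (intro continuous_intros)

lemma g_per: "g (p + pi) = g p"
  unfolding phirhs_def Bfun_per ..

definition T where "T x = (LBINT t=ereal 0..ereal x. 1 / g t)"

lemma T_deriv: "(T has_real_derivative 1 / g x) (at x)"
  unfolding T_def by (rule lbint_deriv) (use g_pos in \<open>auto intro!: continuous_intros g_cont\<close>)

lemma T0: "T 0 = 0" unfolding T_def by simp

lemma T_cont: "continuous_on S T"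
  by (intro continuous_at_imp_continuous_on ballI) (meson DERIV_continuous T_deriv)

lemma T_less: "x < y \<Longrightarrow> T x < T y"
  by (rule DERIV_pos_imp_increasing[where f=T]) (use T_deriv g_pos in force)+

lemma T_inj: "T x = T y \<longleftrightarrow> x = y"
  by (metis T_less linorder_neq_iff order_less_irrefl)

lemma T_grow: "x / Gm \<le> T x \<or> x < 0" and T_grow2: "T x \<le> x / Gm \<or> 0 < x"
proof -
  have d: "((\<lambda>x. T x - x / Gm) has_real_derivative (1 / g x - 1 / Gm)) (at x)" for x
    using Gm_pos by (auto intro!: derivative_eq_intros T_deriv)
  have nn: "0 \<le> 1 / g x - 1 / Gm" for x
    using g_pos[of x] g_up[of x] by (simp add: frac_le)
  show "x / Gm \<le> T x \<or> x < 0"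
  proof (cases "x < 0")
    case False
    then have "T 0 - 0 / Gm \<le> T x - x / Gm" by (intro mono_by_deriv[OF _ d nn]) simp
    then show ?thesis using T0 by simp
  qed simp
  show "T x \<le> x / Gm \<or> 0 < x"
  proof (cases "0 < x")
    case False
    then have "T x - x / Gm \<le> T 0 - 0 / Gm" by (intro mono_by_deriv[OF _ d nn]) simp
    then show ?thesis using T0 by simp
  qed simp
qed

lemma T_surj: "\<exists>x. T x = u"
proof (cases "0 \<le> u")
  case True
  have h: "0 \<le> u * Gm" using True Gm_pos by simp
  then have "u * Gm / Gm \<le> T (u * Gm)" using T_grow[of "u * Gm"] by linarith
  then have 1: "T 0 \<le> u" "u \<le> T (u * Gm)" using T0 True Gm_pos by auto
  obtain x where "T x = u" using IVT'[of T 0 u "u * Gm", OF 1(1) 1(2) h T_cont] by blast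
  then show ?thesis by blast
next
  case False
  have h: "u * Gm < 0" using False Gm_pos by (simp add: mult_neg_pos)
  then have "T (u * Gm) \<le> u * Gm / Gm" using T_grow2[of "u * Gm"] by linarith
  then have 1: "u \<le> T 0" "T (u * Gm) \<le> u" using T0 False Gm_pos by auto
  have 2: "u * Gm \<le> 0" using h by simp
  obtain x where "T x = u" using IVT'[of T "u * Gm" u 0, OF 1(2) 1(1) 2 T_cont] by blast
  then show ?thesis by blast
qed

definition phi0 where "phi0 u = (THE x. T x = u)"

lemma T_phi0: "T (phi0 u) = u"
proof -
  obtain x where x: "T x = u" using T_surj by blast
  have "\<exists>!x. T x = u"
    by (rule ex1I[of _ x]) (use x T_inj in auto)
  then show ?thesis unfolding phi0_def by (rule theI')
qed

lemma phi0_T: "phi0 (T x) = x"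
  using T_phi0[of "T x"] unfolding T_inj .

lemma phi0_deriv: "(phi0 has_real_derivative g (phi0 u)) (at u)"
proof -
  have ic: "isCont phi0 u"
    using isCont_inverse_function[of 1 "phi0 u" phi0 T] phi0_T T_deriv T_phi0
    by (metis DERIV_isCont zero_less_one)
  have "DERIV phi0 u :> inverse (1 / g (phi0 u))"
    by (rule DERIV_inverse_function[where f=T and a="u-1" and b="u+1"])
       (use T_deriv g_pos T_phi0 ic in auto)
  then show ?thesis by simp
qed

lemma phi_eq: "phi l1 l2 c th = phi0"
  unfolding phi_def
proof (rule the_equality)
  show "phi0 0 = 0 \<and> (\<forall>u. (phi0 has_real_derivative g (phi0 u)) (at u))"
    using phi0_deriv phi0_T[of 0] T0 by simp
  fix \<psi> assume a: "\<psi> 0 = 0 \<and> (\<forall>u. (\<psi> has_real_derivative g (\<psi> u)) (at u))"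
  have "(\<lambda>u. T (\<psi> u)) x = (\<lambda>u. u) x" for x
  proof (rule deriv_unique[where h="\<lambda>_. 1"])
    show "((\<lambda>u. T (\<psi> u)) has_real_derivative 1) (at u)" for u
      using DERIV_chain2[OF T_deriv, of \<psi> "g (\<psi> u)" u] a g_pos[of "\<psi> u"] by simp
  qed (use a T0 in auto)
  then show "\<psi> = phi0" using phi0_T by (metis ext)
qed

end

context good begin

lemma shift_deriv:
  fixes f :: "real \<Rightarrow> real"
  assumes "\<And>x. (f has_real_derivative f' x) (at x)"
  shows "((\<lambda>x. f (x + a)) has_real_derivative f' (x + a)) (at x)"
proof -
  have "((\<lambda>x. x + a) has_real_derivative 1) (at x)" by (auto intro!: derivative_eq_intros)
  from DERIV_chain2[OF assms this] show ?thesis by simp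
qed

abbreviation "P \<equiv> phi l1 l2 c th"

lemma phi_T: "P (T x) = x" and T_phi: "T (P u) = u"
  and phi_deriv: "(P has_real_derivative g (P u)) (at u)"
  using phi0_T T_phi0 phi0_deriv unfolding phi_eq by auto

lemma phi0': "P 0 = 0" using phi_T[of 0] T0 by simp

lemma phi_cont: "continuous_on S P"
  by (intro continuous_at_imp_continuous_on ballI) (meson DERIV_continuous phi_deriv)

lemma Tpi_pos: "0 < T pi" using T_less[of 0 pi] T0 by simp

lemma Uper_eq: "Uper l1 l2 c th = T pi"
  unfolding Uper_def
proof (rule the_equality)
  show "0 < T pi \<and> P (T pi) = pi" using Tpi_pos phi_T by simp
  fix U assume "0 < U \<and> P U = pi"
  then show "U = T pi" using T_phi[of U] by simp
qed

lemma T_per: "T (x + pi) = T x + T pi"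
proof (rule deriv_unique[where h="\<lambda>x. 1 / g x" and f="\<lambda>x. T (x + pi)" and g="\<lambda>x. T x + T pi"])
  show "((\<lambda>x. T (x + pi)) has_real_derivative 1 / g x) (at x)" for x
    using shift_deriv[OF T_deriv, of pi x] g_per[of x] by simp
  show "((\<lambda>x. T x + T pi) has_real_derivative 1 / g x) (at x)" for x
    using T_deriv[of x] by (auto intro!: derivative_eq_intros)
qed (simp add: T0)

lemma phi_per: "P (u + T pi) = P u + pi"
proof -
  have "P (u + T pi) = P (T (P u) + T pi)" by (simp add: T_phi)
  also have "\<dots> = P (T (P u + pi))" by (simp add: T_per)
  finally show ?thesis by (simp add: phi_T)
qed

lemma phi_per2: "P (u + 2 * T pi) = P u + 2 * pi"
  using phi_per[of u] phi_per[of "u + T pi"] by (simp add: algebra_simps)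

lemma Bu_per: "Bu l1 l2 c th (u + T pi) = Bu l1 l2 c th u"
  by (simp add: Bu_def phi_per Bfun_per)

lemma dphi_per: "dphi l1 l2 c th (u + T pi) = dphi l1 l2 c th u"
  by (simp add: dphi_def phi_per g_per)

definition Fi where "Fi x = (LBINT t=ereal 0..ereal x. B t / g t)"
definition Gi where "Gi x = (LBINT t=ereal 0..ereal x. (c / g t - 1) / B t)"

lemma B_ne [simp]: "B p \<noteq> 0" using B_pos[of p] by linarith

lemma Fi_deriv: "(Fi has_real_derivative B x / g x) (at x)"
  unfolding Fi_def by (rule lbint_deriv) (auto intro!: continuous_intros g_cont Bfun_cont)

lemma Gi_deriv: "(Gi has_real_derivative (c / g x - 1) / B x) (at x)"
  unfolding Gi_def by (rule lbint_deriv) (auto intro!: continuous_intros g_cont Bfun_cont)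

lemma ffun_eq: "ffun l1 l2 c th u = Dc c th * Fi (P u)"
proof -
  have d: "((\<lambda>u. Dc c th * Fi (P u)) has_real_derivative Dc c th * Bu l1 l2 c th u) (at u)" for u
  proof -
    have "((\<lambda>u. Fi (P u)) has_real_derivative B (P u) / g (P u) * g (P u)) (at u)"
      by (rule DERIV_chain2[OF Fi_deriv phi_deriv])
    then show ?thesis by (auto simp: Bu_def intro: DERIV_cmult)
  qed
  have "ffun l1 l2 c th = (\<lambda>u. Dc c th * Fi (P u))"
    unfolding ffun_def
  proof (rule the_equality)
    show "Dc c th * Fi (P 0) = 0 \<and> (\<forall>u. ((\<lambda>u. Dc c th * Fi (P u)) has_real_derivative Dc c th * Bu l1 l2 c th u) (at u))"
      using d by (simp add: phi0' Fi_def)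
    fix h assume a: "h 0 = 0 \<and> (\<forall>u. (h has_real_derivative Dc c th * Bu l1 l2 c th u) (at u))"
    show "h = (\<lambda>u. Dc c th * Fi (P u))"
      by (rule ext, rule deriv_unique[where h="\<lambda>u. Dc c th * Bu l1 l2 c th u"])
        (use a d in \<open>auto simp: phi0' Fi_def\<close>)
  qed
  then show ?thesis by simp
qed

lemma ffun_deriv: "(ffun l1 l2 c th has_real_derivative Dc c th * Bu l1 l2 c th u) (at u)"
proof -
  have "((\<lambda>u. Fi (P u)) has_real_derivative B (P u) / g (P u) * g (P u)) (at u)"
    by (rule DERIV_chain2[OF Fi_deriv phi_deriv])
  then have "((\<lambda>u. Dc c th * Fi (P u)) has_real_derivative Dc c th * Bu l1 l2 c th u) (at u)"
    by (auto simp: Bu_def intro: DERIV_cmult)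
  moreover have "ffun l1 l2 c th = (\<lambda>u. Dc c th * Fi (P u))" using ffun_eq by auto
  ultimately show ?thesis by simp
qed

lemma ffun_per: "ffun l1 l2 c th (u + T pi) = ffun l1 l2 c th u + ffun l1 l2 c th (T pi)"
proof (rule deriv_unique[where h="\<lambda>u. Dc c th * Bu l1 l2 c th u" and f="\<lambda>u. ffun l1 l2 c th (u + T pi)"
    and g="\<lambda>u. ffun l1 l2 c th u + ffun l1 l2 c th (T pi)"])
  show "((\<lambda>u. ffun l1 l2 c th (u + T pi)) has_real_derivative Dc c th * Bu l1 l2 c th u) (at u)" for u
    using shift_deriv[OF ffun_deriv, of "T pi" u] Bu_per[of u] by simp
  show "((\<lambda>u. ffun l1 l2 c th u + ffun l1 l2 c th (T pi)) has_real_derivative Dc c th * Bu l1 l2 c th u) (at u)" for u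
    using ffun_deriv[of u] by (auto intro!: derivative_eq_intros)
qed (simp add: ffun_eq phi0' Fi_def)

lemma Gint_cont: "continuous_on UNIV (\<lambda>s. (c - dphi l1 l2 c th s) / Bu l1 l2 c th s)"
  unfolding dphi_def Bu_def
  by (intro continuous_intros continuous_on_compose2[OF g_cont phi_cont]
      continuous_on_compose2[OF Bfun_cont phi_cont]) auto

lemma Gfun_deriv: "(Gfun l1 l2 c th has_real_derivative (c - dphi l1 l2 c th u) / Bu l1 l2 c th u) (at u)"
  unfolding Gfun_def[abs_def] by (rule lbint_deriv[OF Gint_cont])

lemma Gfun_eq: "Gfun l1 l2 c th u = Gi (P u)"
proof (rule deriv_unique[where h="\<lambda>u. (c - dphi l1 l2 c th u) / Bu l1 l2 c th u"
   and f="Gfun l1 l2 c th" and g="\<lambda>u. Gi (P u)"])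
  show "(Gfun l1 l2 c th has_real_derivative (c - dphi l1 l2 c th u) / Bu l1 l2 c th u) (at u)" for u
    by (rule Gfun_deriv)
  show "((\<lambda>u. Gi (P u)) has_real_derivative (c - dphi l1 l2 c th u) / Bu l1 l2 c th u) (at u)" for u
  proof -
    have "((\<lambda>u. Gi (P u)) has_real_derivative (c / g (P u) - 1) / B (P u) * g (P u)) (at u)"
      by (rule DERIV_chain2[OF Gi_deriv phi_deriv])
    moreover have "(c / g (P u) - 1) / B (P u) * g (P u) = (c - dphi l1 l2 c th u) / Bu l1 l2 c th u"
      by (simp add: dphi_def Bu_def field_simps)
    ultimately show ?thesis by simp
  qed
qed (simp add: Gfun_def Gi_def phi0')

lemma Gfun_per: "Gfun l1 l2 c th (u + T pi) = Gfun l1 l2 c th u + Gfun l1 l2 c th (T pi)"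
proof (rule deriv_unique[where h="\<lambda>u. (c - dphi l1 l2 c th u) / Bu l1 l2 c th u"
   and f="\<lambda>u. Gfun l1 l2 c th (u + T pi)" and g="\<lambda>u. Gfun l1 l2 c th u + Gfun l1 l2 c th (T pi)"])
  show "((\<lambda>u. Gfun l1 l2 c th (u + T pi)) has_real_derivative (c - dphi l1 l2 c th u) / Bu l1 l2 c th u) (at u)" for u
    using shift_deriv[OF Gfun_deriv, of "T pi" u] Bu_per[of u] dphi_per[of u] by simp
  show "((\<lambda>u. Gfun l1 l2 c th u + Gfun l1 l2 c th (T pi)) has_real_derivative (c - dphi l1 l2 c th u) / Bu l1 l2 c th u) (at u)" for u
    using Gfun_deriv[of u] by (auto intro!: derivative_eq_intros)
qed (simp add: Gfun_def)

lemma Hfun_eq: "Hfun l1 l2 c th = integral {0..pi} (Fint l1 l2 c th)"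
proof -
  define K where "K x = (Dc c th)^2 * Fi x + c * Gi x" for x
  have Kd: "(K has_real_derivative Fint l1 l2 c th x) (at x)" for x
    unfolding K_def Fint_def using Fi_deriv[of x] Gi_deriv[of x]
    by (auto intro!: derivative_eq_intros simp: power2_eq_square) (simp add: field_simps)
  have "(Fint l1 l2 c th has_integral K pi - K 0) {0..pi}"
    by (rule fundamental_theorem_of_calculus)
       (use Kd in \<open>auto simp: has_real_derivative_iff_has_vector_derivative intro: has_vector_derivative_at_within\<close>)
  then have "integral {0..pi} (Fint l1 l2 c th) = K pi" by (simp add: integral_unique K_def Fi_def Gi_def)
  moreover have "Hfun l1 l2 c th = K pi"
    unfolding Hfun_def K_def Uper_eq ffun_eq Gfun_eq phi_T by (simp add: power2_eq_square)
  ultimately show ?thesis by simp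
qed

end

lemma integral_pos:
  fixes f :: "real \<Rightarrow> real"
  assumes "a < b" "continuous_on {a..b} f" "\<And>x. x \<in> {a..b} \<Longrightarrow> 0 < f x"
  shows "0 < integral {a..b} f"
proof -
  obtain x0 where x0: "x0 \<in> {a..b}" "\<And>y. y \<in> {a..b} \<Longrightarrow> f x0 \<le> f y"
    using continuous_attains_inf[of "{a..b}" f] assms by auto
  have "integral {a..b} (\<lambda>_. f x0) \<le> integral {a..b} f"
    by (rule integral_le) (use assms x0 in \<open>auto intro: integrable_continuous_interval\<close>)
  moreover have "integral {a..b} (\<lambda>_. f x0) = (b - a) * f x0" using assms by simp
  moreover have "0 < (b - a) * f x0" using assms x0 by simp
  ultimately show ?thesis by linarith
qed

definition "bbc l1 l2 = sqrt (l1^2 - l2^2 + 1)"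
definition "K1c l1 c = c^3 / (l1^2 * sqrt (c^2 + 2 * l1^2))"
definition "K2c l2 c = c / l2^2"

context good begin

lemma Fint_cont: "continuous_on S (Fint l1 l2 c th)"
  unfolding Fint_def[abs_def]
  by (intro continuous_intros g_cont Bfun_cont) auto

lemma g_sq: "(g p)^2 = c^2 + 2 * cos th * B p - (Dc c th)^2 * (B p)^2"
  unfolding phirhs_def using W_low[of p] eps0_pos by simp

lemma Fint_alt: "Fint l1 l2 c th p = ((Dc c th)^2 * (B p)^2 + c^2) / (g p * B p) - c / B p"
  unfolding Fint_def by (simp add: field_simps power2_eq_square)

lemma Fint_lower:
  assumes "0 \<le> cos th" "0 \<le> p"
  shows "K1c l1 c / (sqrt eps0 + bbc l1 l2 * p) - K2c l2 c \<le> Fint l1 l2 c th p"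
proof -
  define a where "a = sqrt eps0"
  define b where "b = bbc l1 l2"
  define Q where "Q = c^2 + 2 * l1^2"
  have a0: "0 < a" unfolding a_def using eps0_pos by simp
  have "l2^2 \<le> l1^2" using l12 l2pos by (simp add: power_mono)
  then have b0: "0 < b" unfolding b_def bbc_def by simp
  have Q0: "0 < Q" unfolding Q_def using cpos by (simp add: add_pos_nonneg)
  have c1: "cos th \<le> 1" by simp
  have s2: "(sin p)^2 \<le> p^2" using abs_sin_x_le_abs_x[of p] by (simp add: abs_le_square_iff)
  have M0: "0 \<le> l1^2 - l2^2" using l12 l2pos by (simp add: power_mono)
  have e1: "c^2 - (1 - cos th) * B p = eps0 + (1 - cos th) * (l1^2 - B p)"
    unfolding eps0_def by (simp add: algebra_simps)
  have "l1^2 - B p = (l1^2 - l2^2) * (sin p)^2" using Bfun_bounds(3)[OF l2pos l12, of p] by simp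
  also have "\<dots> \<le> (l1^2 - l2^2) * p^2" using s2 M0 by (simp add: mult_left_mono)
  also have "\<dots> \<le> b^2 * p^2" unfolding b_def bbc_def using M0 by (simp add: mult_right_mono)
  finally have lb: "l1^2 - B p \<le> b^2 * p^2" .
  have lb0: "0 \<le> l1^2 - B p" using B_up[of p] by simp
  have "(1 - cos th) * (l1^2 - B p) \<le> 1 * (b^2 * p^2)"
    using assms(1) c1 lb lb0 by (intro mult_mono) auto
  then have f1: "c^2 - (1 - cos th) * B p \<le> a^2 + b^2 * p^2"
    unfolding e1 a_def using eps0_pos by simp
  have f1': "a^2 + b^2 * p^2 \<le> (a + b * p)^2"
    using a0 b0 assms(2) by (simp add: power2_sum power_mult_distrib)
  have "(1 + cos th) * B p \<le> 2 * l1^2" using c1 B_up[of p] B_pos[of p] by (intro mult_mono) auto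
  then have f2: "c^2 + (1 + cos th) * B p \<le> Q" unfolding Q_def by simp
  have f20: "0 \<le> c^2 + (1 + cos th) * B p" using B_pos[of p] assms(1) by simp
  have "0 \<le> (1 - cos th) * (l1^2 - B p)" using c1 lb0 by (intro mult_nonneg_nonneg) auto
  then have f10: "0 \<le> c^2 - (1 - cos th) * B p" using e1 eps0_pos by linarith
  have "(c * g p)^2 = (c^2 - (1 - cos th) * B p) * (c^2 + (1 + cos th) * B p)"
    using W_fact[of p] g_sq[of p] by (simp add: power_mult_distrib)
  also have "\<dots> \<le> (a + b * p)^2 * Q"
    using f1 f1' f2 f10 f20 by (intro mult_mono) auto
  also have "\<dots> = ((a + b * p) * sqrt Q)^2" using Q0 by (simp add: power_mult_distrib)
  finally have sq: "(c * g p)^2 \<le> ((a + b * p) * sqrt Q)^2" .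
  have "0 \<le> (a + b * p) * sqrt Q" using a0 b0 assms(2) Q0 by simp
  from power2_le_imp_le[OF sq this] have "c * g p \<le> (a + b * p) * sqrt Q" .
  then have h: "(c * g p) / (((a + b * p) * sqrt Q) * g p) \<le> ((a + b * p) * sqrt Q) / (((a + b * p) * sqrt Q) * g p)"
    using g_pos[of p] a0 b0 assms(2) Q0 by (intro divide_right_mono) auto
  have X0: "(a + b * p) * sqrt Q \<noteq> 0" using a0 b0 assms(2) Q0 by (smt (verit) mult_nonneg_nonneg real_sqrt_gt_zero mult_pos_pos)
  have ig: "c / ((a + b * p) * sqrt Q) \<le> 1 / g p"
    using h X0 by simp
  have "c^2 / l1^2 * (c / ((a + b * p) * sqrt Q)) \<le> c^2 / l1^2 * (1 / g p)"
    using ig by (intro mult_left_mono) auto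
  also have "\<dots> \<le> c^2 / B p * (1 / g p)"
  proof (rule mult_right_mono)
    have "0 < l1^2 * B p" using B_pos[of p] l1pos by simp
    then show "c^2 / l1^2 \<le> c^2 / B p" using B_up[of p] by (intro divide_left_mono) simp_all
  qed (use g_pos[of p] in simp)
  also have "\<dots> \<le> ((Dc c th)^2 * (B p)^2 + c^2) / (g p * B p)"
    using B_pos[of p] g_pos[of p] by (simp add: field_simps)
  moreover have "K1c l1 c / (a + b * p) = c^2 / l1^2 * (c / ((a + b * p) * sqrt Q))"
    unfolding K1c_def Q_def by (simp add: power3_eq_cube power2_eq_square)
  ultimately have t1: "K1c l1 c / (a + b * p) \<le> ((Dc c th)^2 * (B p)^2 + c^2) / (g p * B p)"
    by simp
  have t2: "c / B p \<le> K2c l2 c"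
  proof -
    have "0 < B p * l2^2" using B_pos[of p] l2pos by simp
    then show ?thesis unfolding K2c_def using B_low[of p] cpos by (intro divide_left_mono) simp_all
  qed
  show ?thesis using t1 t2 unfolding Fint_alt a_def b_def by linarith
qed

lemma K1c_pos: "0 < K1c l1 c" unfolding K1c_def using cpos l1pos by (simp add: add_pos_nonneg)

lemma bbc_pos: "0 < bbc l1 l2"
proof -
  have "l2^2 \<le> l1^2" using l12 l2pos by (simp add: power_mono)
  then show ?thesis unfolding bbc_def by simp
qed

lemma Hint_lower:
  assumes "0 \<le> cos th"
  shows "K1c l1 c / bbc l1 l2 * (ln (bbc l1 l2 * pi) - ln (sqrt eps0)) - pi * K2c l2 c
         \<le> integral {0..pi} (Fint l1 l2 c th)"
proof -
  define a where "a = sqrt eps0"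
  define b where "b = bbc l1 l2"
  define K1 where "K1 = K1c l1 c"
  define K2 where "K2 = K2c l2 c"
  have a0: "0 < a" unfolding a_def using eps0_pos by simp
  have b0: "0 < b" unfolding b_def by (rule bbc_pos)
  define G where "G x = K1 * ln (a + b * x) / b - K2 * x" for x
  have pos: "0 < a + b * x" if "x \<in> {0..pi}" for x
  proof -
    have "0 \<le> b * x" using b0 that by simp
    then show ?thesis using a0 by linarith
  qed
  have "((\<lambda>x. K1 / (a + b * x) - K2) has_integral G pi - G 0) {0..pi}"
  proof (rule fundamental_theorem_of_calculus)
    fix x assume x: "x \<in> {0..pi}"
    have "(G has_real_derivative K1 * (b / (a + b * x)) / b - K2) (at x)"
      unfolding G_def using pos[OF x] by (auto intro!: derivative_eq_intros)
    moreover have "K1 * (b / (a + b * x)) / b - K2 = K1 / (a + b * x) - K2" using b0 by simp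
    ultimately show "(G has_vector_derivative K1 / (a + b * x) - K2) (at x within {0..pi})"
      by (auto simp: has_real_derivative_iff_has_vector_derivative intro: has_vector_derivative_at_within)
  qed simp
  then have "G pi - G 0 = integral {0..pi} (\<lambda>x. K1 / (a + b * x) - K2)"
    by (simp add: integral_unique)
  also have "\<dots> \<le> integral {0..pi} (Fint l1 l2 c th)"
  proof (rule integral_le)
    show "(\<lambda>x. K1 / (a + b * x) - K2) integrable_on {0..pi}"
      using \<open>((\<lambda>x. K1 / (a + b * x) - K2) has_integral G pi - G 0) {0..pi}\<close> by blast
    show "Fint l1 l2 c th integrable_on {0..pi}"
      by (rule integrable_continuous_interval) (rule Fint_cont)
    show "K1 / (a + b * x) - K2 \<le> Fint l1 l2 c th x" if "x \<in> {0..pi}" for x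
      using Fint_lower[OF assms, of x] that unfolding K1_def K2_def a_def b_def by simp
  qed
  finally have i: "G pi - G 0 \<le> integral {0..pi} (Fint l1 l2 c th)" .
  have "0 < b * pi" using b0 by simp
  then have "ln (b * pi) \<le> ln (a + b * pi)" using a0 by (subst ln_le_cancel_iff) auto
  then have "K1 / b * (ln (b * pi) - ln a) \<le> K1 / b * (ln (a + b * pi) - ln a)"
    using K1c_pos b0 unfolding K1_def by (intro mult_left_mono) auto
  moreover have "G pi - G 0 = K1 / b * (ln (a + b * pi) - ln a) - pi * K2"
    using b0 unfolding G_def by (simp add: field_simps)
  ultimately show ?thesis using i unfolding K1_def K2_def a_def b_def by linarith
qed

end

definition "Hint l1 l2 c t = integral {0..pi} (Fint l1 l2 c t)"

lemma good_mono:
  assumes "good l1 l2 c t1" "0 \<le> t" "t \<le> t1" "t1 \<le> pi"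
  shows "good l1 l2 c t"
proof -
  have "cos t1 \<le> cos t" using assms by (intro cos_monotone_0_pi_le) auto
  then show ?thesis using assms(1) unfolding good_def by auto
qed

lemma Fint_strict_mono:
  assumes g1: "good l1 l2 c t1" and g2: "good l1 l2 c t2"
    and t: "0 \<le> t1" "t1 < t2" "t2 \<le> pi/2"
  shows "Fint l1 l2 c t1 p < Fint l1 l2 c t2 p"
proof -
  interpret A: good l1 l2 c t1 by (rule g1)
  interpret C: good l1 l2 c t2 by (rule g2)
  let ?B = "Bfun l1 l2 p"
  have Bp: "0 < ?B" by (rule A.B_pos)
  have s1: "0 \<le> sin t1" using t by (intro sin_ge_zero) auto
  have s12: "sin t1 \<le> sin t2" using t by (subst sin_mono_le_eq) auto
  have "Dc c t1 \<le> Dc c t2" unfolding Dc_def using s12 A.cpos by (simp add: divide_right_mono)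
  moreover have "0 \<le> Dc c t1" unfolding Dc_def using s1 A.cpos by simp
  ultimately have "(Dc c t1)^2 \<le> (Dc c t2)^2" by (rule power_mono)
  then have N: "(Dc c t1)^2 * ?B^2 + c^2 \<le> (Dc c t2)^2 * ?B^2 + c^2"
    by (simp add: mult_right_mono)
  have N0: "0 < (Dc c t1)^2 * ?B^2 + c^2" using A.cpos by (simp add: add_nonneg_pos)
  have k12: "cos t2 < cos t1" using t by (intro cos_monotone_0_pi) auto
  have k2: "0 \<le> cos t2" using t by (intro cos_ge_zero) auto
  have fact: "c^2 * (phirhs l1 l2 c t p)^2 = (c^2 + cos t * ?B)^2 - ?B^2"
    if "good l1 l2 c t" for t
  proof -
    interpret X: good l1 l2 c t by (rule that)
    show ?thesis unfolding X.g_sq X.W_fact by (simp add: algebra_simps power2_eq_square)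
  qed
  have "0 < c^2 + cos t2 * ?B" using k2 Bp A.cpos by (simp add: add_pos_nonneg)
  moreover have "c^2 + cos t2 * ?B < c^2 + cos t1 * ?B" using k12 Bp by simp
  ultimately have "(c^2 + cos t2 * ?B)^2 < (c^2 + cos t1 * ?B)^2"
    by (intro power_strict_mono) auto
  then have "c^2 * (phirhs l1 l2 c t2 p)^2 < c^2 * (phirhs l1 l2 c t1 p)^2"
    using fact[OF g1] fact[OF g2] by simp
  then have "(phirhs l1 l2 c t2 p)^2 < (phirhs l1 l2 c t1 p)^2" using A.cpos by simp
  then have gg: "phirhs l1 l2 c t2 p < phirhs l1 l2 c t1 p"
    using A.g_pos[of p] C.g_pos[of p] by (simp add: power_less_imp_less_base)
  have "((Dc c t1)^2 * ?B^2 + c^2) / (phirhs l1 l2 c t1 p * ?B)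
        < ((Dc c t1)^2 * ?B^2 + c^2) / (phirhs l1 l2 c t2 p * ?B)"
    using gg Bp C.g_pos[of p] N0 by (intro divide_strict_left_mono) auto
  also have "\<dots> \<le> ((Dc c t2)^2 * ?B^2 + c^2) / (phirhs l1 l2 c t2 p * ?B)"
    using N Bp C.g_pos[of p] by (intro divide_right_mono) auto
  finally show ?thesis unfolding A.Fint_alt C.Fint_alt by simp
qed

lemma Hint_strict_mono:
  assumes g1: "good l1 l2 c t1" and g2: "good l1 l2 c t2"
    and t: "0 \<le> t1" "t1 < t2" "t2 \<le> pi/2"
  shows "Hint l1 l2 c t1 < Hint l1 l2 c t2"
proof -
  interpret A: good l1 l2 c t1 by (rule g1)
  interpret C: good l1 l2 c t2 by (rule g2)
  have "0 < integral {0..pi} (\<lambda>p. Fint l1 l2 c t2 p - Fint l1 l2 c t1 p)"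
    using Fint_strict_mono[OF g1 g2 t]
    by (intro integral_pos continuous_intros A.Fint_cont C.Fint_cont) auto
  also have "\<dots> = Hint l1 l2 c t2 - Hint l1 l2 c t1"
    unfolding Hint_def
    by (rule integral_diff) (auto intro: integrable_continuous_interval A.Fint_cont C.Fint_cont)
  finally show ?thesis by simp
qed

lemma Hint_cont:
  assumes g1: "good l1 l2 c t1" and t: "0 \<le> t1" "t1 \<le> pi"
  shows "continuous_on {0..t1} (Hint l1 l2 c)"
proof -
  interpret A: good l1 l2 c t1 by (rule g1)
  have gz: "good l1 l2 c (fst z)" if "z \<in> {0..t1} \<times> cbox 0 pi" for z
    using that t by (intro good_mono[OF g1]) auto
  have ne1: "phirhs l1 l2 c (fst z) (snd z) \<noteq> 0" if "z \<in> {0..t1} \<times> cbox 0 pi" for z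
  proof -
    interpret X: good l1 l2 c "fst z" by (rule gz[OF that])
    show ?thesis by simp
  qed
  have ne2: "Bfun l1 l2 (snd z) \<noteq> 0" for z using A.B_ne by simp
  have pc: "continuous_on S (\<lambda>z::real\<times>real. phirhs l1 l2 c (fst z) (snd z))" for S
    unfolding phirhs_def Bfun_def Dc_def using A.cpos by (intro continuous_intros) auto
  have bc: "continuous_on S (\<lambda>z::real\<times>real. Bfun l1 l2 (snd z))" for S
    unfolding Bfun_def by (intro continuous_intros)
  have "continuous_on ({0..t1} \<times> cbox 0 pi) (\<lambda>z. Fint l1 l2 c (fst z) (snd z))"
    unfolding Fint_def Dc_def
    by (intro continuous_intros pc bc) (use ne1 ne2 A.cpos in auto)
  then have "continuous_on ({0..t1} \<times> cbox 0 pi) (\<lambda>(x, t). Fint l1 l2 c x t)"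
    by (simp add: case_prod_beta')
  from integral_continuous_on_param[OF this] show ?thesis
    unfolding Hint_def[abs_def] by simp
qed

lemma Hint0_neg:
  assumes g: "good l1 l2 c 0"
  shows "Hint l1 l2 c 0 < 0"
proof -
  interpret A: good l1 l2 c 0 by (rule g)
  have neg: "0 < - Fint l1 l2 c 0 p" for p
  proof -
    have D0: "Dc c 0 = 0" by (simp add: Dc_def)
    have "(phirhs l1 l2 c 0 p)^2 = c^2 + 2 * Bfun l1 l2 p" using A.g_sq[of p] by (simp add: D0)
    then have "c^2 < (phirhs l1 l2 c 0 p)^2" using A.B_pos[of p] by simp
    then have "c < phirhs l1 l2 c 0 p" using A.g_pos[of p] by (simp add: power_less_imp_less_base)
    then have "c / phirhs l1 l2 c 0 p < 1" using A.g_pos[of p] by simp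
    then have "(c / phirhs l1 l2 c 0 p - 1) / Bfun l1 l2 p < 0" using A.B_pos[of p]
      by (simp add: divide_neg_pos)
    then have "c * ((c / phirhs l1 l2 c 0 p - 1) / Bfun l1 l2 p) < 0" using A.cpos
      by (rule mult_pos_neg[rotated])
    then show ?thesis unfolding Fint_def by (simp add: D0)
  qed
  have "0 < integral {0..pi} (\<lambda>p. - Fint l1 l2 c 0 p)"
    using neg by (intro integral_pos continuous_intros A.Fint_cont) auto
  then show ?thesis unfolding Hint_def by (simp add: integral_neg)
qed

lemma Hint_pi2_pos:
  assumes g: "good l1 l2 c (pi/2)"
  shows "0 < Hint l1 l2 c (pi/2)"
proof -
  interpret A: good l1 l2 c "pi/2" by (rule g)
  have pos: "0 < Fint l1 l2 c (pi/2) p" for p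
  proof -
    let ?B = "Bfun l1 l2 p" and ?g = "phirhs l1 l2 c (pi/2) p" and ?D = "Dc c (pi/2)"
    have D: "?D = 1 / c" by (simp add: Dc_def)
    have "0 < ?D^2 * ?B^2" using A.cpos A.B_pos[of p] by (simp add: D)
    then have "?g^2 < c^2" using A.g_sq[of p] by simp
    then have gc: "?g < c" using A.cpos by (simp add: power_less_imp_less_base)
    have "c / ?B = c^2 / (c * ?B)" using A.cpos by (simp add: power2_eq_square)
    also have "\<dots> < c^2 / (?g * ?B)"
      using gc A.g_pos[of p] A.B_pos[of p] A.cpos by (intro divide_strict_left_mono) auto
    also have "\<dots> \<le> (?D^2 * ?B^2 + c^2) / (?g * ?B)"
      using A.g_pos[of p] A.B_pos[of p] by (intro divide_right_mono) auto
    finally show ?thesis unfolding A.Fint_alt by simp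
  qed
  show ?thesis unfolding Hint_def
    using pos by (intro integral_pos A.Fint_cont) auto
qed

lemma exists_pos_small:
  assumes l: "0 < l2" "l2 \<le> l1" and c: "0 < c" "c \<le> l1"
  shows "\<exists>t. 0 < t \<and> t < pi/2 \<and> good l1 l2 c t \<and> 0 < Hint l1 l2 c t"
proof -
  define K1 where "K1 = K1c l1 c"
  define K2 where "K2 = K2c l2 c"
  define b where "b = bbc l1 l2"
  define L where "L = ln (b * pi) - pi * K2 * b / K1"
  define e where "e = min (c^2/2) (exp (2 * L) / 2)"
  define k where "k = 1 - (c^2 - e) / l1^2"
  define t where "t = arccos k"
  have l1: "0 < l1" using l by linarith
  have K1p: "0 < K1" unfolding K1_def K1c_def using c l1 by (simp add: add_pos_nonneg)
  have bp: "0 < b" unfolding b_def bbc_def using l by (simp add: add_nonneg_pos power_mono)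
  have e0: "0 < e" unfolding e_def using c by simp
  have "0 < c^2" using c by simp
  then have ec: "e < c^2" unfolding e_def by linarith
  have "0 < exp (2 * L)" by simp
  then have eL: "e < exp (2 * L)" unfolding e_def by linarith
  have cl: "c^2 \<le> l1^2" using c by (simp add: power_mono)
  have k0: "0 < k" unfolding k_def using e0 cl l1 by (simp add: field_simps)
  have k1: "k < 1" unfolding k_def using ec l1 by (simp add: field_simps)
  have ct: "cos t = k" unfolding t_def using k0 k1 by simp
  have t0: "0 \<le> t" "t \<le> pi" unfolding t_def using k0 k1 by (auto intro: arccos_lbound arccos_ubound)
  have tpos: "0 < t" using ct k1 t0 by (cases "t = 0") auto
  have tpi2: "t < pi/2"
  proof (rule ccontr)
    assume "\<not> t < pi/2"
    then have "cos t \<le> cos (pi/2)" using t0 by (intro cos_monotone_0_pi_le) auto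
    then show False using ct k0 by simp
  qed
  have gt: "good l1 l2 c t"
    unfolding good_def using l c e0 l1 by (simp add: ct k_def field_simps)
  interpret A: good l1 l2 c t by (rule gt)
  have epsE: "A.eps0 = e" unfolding A.eps0_def ct k_def using l1 by (simp add: field_simps)
  have "sqrt e < sqrt (exp (2 * L))" using eL by simp
  also have "sqrt (exp (2 * L)) = exp L"
    by (simp add: exp_double)
  finally have se: "sqrt e < exp L" .
  have "ln (sqrt e) < ln (exp L)" using se e0 by (subst ln_less_cancel_iff) auto
  then have "ln (sqrt e) < L" by simp
  then have "pi * K2 * b / K1 < ln (b * pi) - ln (sqrt e)" unfolding L_def by simp
  then have "K1 / b * (pi * K2 * b / K1) < K1 / b * (ln (b * pi) - ln (sqrt e))"
    using K1p bp by (intro mult_strict_left_mono) auto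
  then have "0 < K1 / b * (ln (b * pi) - ln (sqrt e)) - pi * K2" using K1p bp by simp
  also have "\<dots> \<le> Hint l1 l2 c t"
    using A.Hint_lower ct k0 epsE unfolding Hint_def K1_def K2_def b_def by simp
  finally show ?thesis using tpos tpi2 gt by blast
qed

lemma tp_iff:
  assumes l1: "0 < l1" and c: "0 < c" and t: "0 < t" "t < pi/2"
  shows "t < theta_plus l1 c \<longleftrightarrow> 1 - c^2/l1^2 < cos t"
proof (cases "sqrt 2 * l1 < c")
  case True
  have "(sqrt 2 * l1)^2 < c^2" using True l1 by (intro power_strict_mono) auto
  then have "2 * l1^2 < c^2" by (simp add: power_mult_distrib)
  then have "2 < c^2 / l1^2" using l1 by (simp add: field_simps)
  moreover have "0 < cos t" using t by (intro cos_gt_zero_pi) auto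
  ultimately show ?thesis using True t unfolding theta_plus_def by simp
next
  case False
  define k where "k = 1 - c^2/l1^2"
  have "c^2 \<le> (sqrt 2 * l1)^2" using False c by (intro power_mono) auto
  then have "c^2 \<le> 2 * l1^2" by (simp add: power_mult_distrib)
  then have "c^2 / l1^2 \<le> 2" using l1 by (simp add: field_simps)
  then have km: "-1 \<le> k" unfolding k_def by simp
  have kp: "k \<le> 1" unfolding k_def using l1 by simp
  have tp: "theta_plus l1 c = arccos k" unfolding theta_plus_def k_def using False by simp
  have a0: "0 \<le> arccos k" "arccos k \<le> pi" using km kp by (auto intro: arccos_lbound arccos_ubound)
  show ?thesis unfolding tp k_def[symmetric]
  proof
    assume "t < arccos k"
    then have "cos (arccos k) < cos t" using t a0 by (intro cos_monotone_0_pi) auto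
    then show "k < cos t" using km kp by simp
  next
    assume h: "k < cos t"
    show "t < arccos k"
    proof (rule ccontr)
      assume "\<not> t < arccos k"
      then have "cos t \<le> cos (arccos k)" using t a0 by (intro cos_monotone_0_pi_le) auto
      then show False using h km kp by simp
    qed
  qed
qed

lemma theta_tilde_props:
  assumes l: "0 < l2" "l2 \<le> l1" and c: "0 < c"
  shows "good l1 l2 c (theta_tilde l1 l2 c) \<and> 0 < theta_tilde l1 l2 c \<and> theta_tilde l1 l2 c < pi/2
         \<and> Hfun l1 l2 c (theta_tilde l1 l2 c) = 0"
proof -
  have l1: "0 < l1" using l by linarith
  have goodI: "good l1 l2 c t" if "1 - c^2/l1^2 < cos t" for t
    unfolding good_def using l c that by simp
  have goodD: "1 - c^2/l1^2 < cos t" if "good l1 l2 c t" for t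
    using that unfolding good_def by simp
  have HH: "Hfun l1 l2 c t = Hint l1 l2 c t" if "good l1 l2 c t" for t
  proof -
    interpret X: good l1 l2 c t by (rule that)
    show ?thesis unfolding Hint_def by (rule X.Hfun_eq)
  qed
  let ?Q = "\<lambda>t. 0 < t \<and> t < pi / 2 \<and> t < theta_plus l1 c \<and> Hfun l1 l2 c t = 0"
  have Qiff: "?Q t \<longleftrightarrow> 0 < t \<and> t < pi/2 \<and> good l1 l2 c t \<and> Hint l1 l2 c t = 0" for t
  proof
    assume q: "?Q t"
    then have g: "good l1 l2 c t" using tp_iff[OF l1 c] goodI by blast
    then show "0 < t \<and> t < pi/2 \<and> good l1 l2 c t \<and> Hint l1 l2 c t = 0" using q HH by simp
  next
    assume q: "0 < t \<and> t < pi/2 \<and> good l1 l2 c t \<and> Hint l1 l2 c t = 0"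
    then show "?Q t" using tp_iff[OF l1 c, of t] goodD HH by simp
  qed
  have g0: "good l1 l2 c 0" using c l1 by (intro goodI) simp
  have ex: "\<exists>t. 0 < t \<and> t < pi/2 \<and> good l1 l2 c t \<and> Hint l1 l2 c t = 0"
  proof -
    obtain t1 where t1: "0 < t1" "t1 \<le> pi/2" "good l1 l2 c t1" "0 < Hint l1 l2 c t1"
    proof (cases "l1 < c")
      case True
      have "l1^2 < c^2" using True l1 by (intro power_strict_mono) auto
      then have "1 - c^2/l1^2 < cos (pi/2)" using l1 by (simp add: field_simps)
      then have gp: "good l1 l2 c (pi/2)" by (rule goodI)
      show ?thesis by (rule that[of "pi/2"]) (use gp Hint_pi2_pos[OF gp] in auto)
    next
      case False
      then obtain t where "0 < t \<and> t < pi/2 \<and> good l1 l2 c t \<and> 0 < Hint l1 l2 c t"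
        using exists_pos_small[OF l c] by force
      then show ?thesis using that by force
    qed
    have cont: "continuous_on {0..t1} (Hint l1 l2 c)"
      by (rule Hint_cont[OF t1(3)]) (use t1 in auto)
    obtain t where t: "0 \<le> t" "t \<le> t1" "Hint l1 l2 c t = 0"
      using IVT'[of "Hint l1 l2 c" 0 0 t1, OF _ _ _ cont] Hint0_neg[OF g0] t1 by force
    have gt: "good l1 l2 c t" by (rule good_mono[OF t1(3)]) (use t t1 in auto)
    have "t \<noteq> 0" using t Hint0_neg[OF g0] by auto
    moreover have "t \<noteq> t1" using t t1 by auto
    ultimately show ?thesis using t t1 gt by (intro exI[of _ t]) auto
  qed
  have uniq: "t = t'" if "?Q t" "?Q t'" for t t'
  proof -
    have a: "0 < t" "t < pi/2" "good l1 l2 c t" "Hint l1 l2 c t = 0" using that(1) Qiff by auto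
    have b: "0 < t'" "t' < pi/2" "good l1 l2 c t'" "Hint l1 l2 c t' = 0" using that(2) Qiff by auto
    show ?thesis
    proof (rule linorder_cases[of t t'])
      assume "t < t'"
      then have "Hint l1 l2 c t < Hint l1 l2 c t'" using a b by (intro Hint_strict_mono) auto
      then show ?thesis using a b by simp
    next
      assume "t' < t"
      then have "Hint l1 l2 c t' < Hint l1 l2 c t" using a b by (intro Hint_strict_mono) auto
      then show ?thesis using a b by simp
    qed
  qed
  have "\<exists>!t. ?Q t" using ex uniq Qiff by metis
  then have "?Q (theta_tilde l1 l2 c)" unfolding theta_tilde_def by (rule theI')
  then show ?thesis using Qiff by blast
qed

context good begin

lemma periodic_X:
  assumes H: "Hfun l1 l2 c th = 0"
  shows "\<exists>Z::complex. Z \<noteq> 0 \<and> (\<forall>z. Xmap l1 l2 c th (z + Z) = Xmap l1 l2 c th z)"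
proof -
  define U where "U = T pi"
  define fU where "fU = ffun l1 l2 c th U"
  define GU where "GU = Gfun l1 l2 c th U"
  define Z where "Z = Complex (2 * U) (- 2 * fU / c)"
  have U0: "0 < U" unfolding U_def by (rule Tpi_pos)
  have HU: "Dc c th * fU + c * GU = 0" using H unfolding Hfun_def Uper_eq fU_def GU_def U_def .
  have "Xmap l1 l2 c th (z + Z) = Xmap l1 l2 c th z" for z
  proof -
    define u where "u = Re z"
    define v where "v = Im z"
    have r: "Re (z + Z) = u + 2 * U" "Im (z + Z) = v - 2 * fU / c"
      unfolding Z_def u_def v_def by simp_all
    have u2: "u + 2 * U = (u + U) + U" by simp
    have e1: "Bu l1 l2 c th (u + 2 * U) = Bu l1 l2 c th u"
    proof -
      have "Bu l1 l2 c th (u + 2 * U) = Bu l1 l2 c th ((u + U) + U)" by (simp only: u2)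
      also have "\<dots> = Bu l1 l2 c th (u + U)" unfolding U_def by (rule Bu_per)
      also have "\<dots> = Bu l1 l2 c th u" unfolding U_def by (rule Bu_per)
      finally show ?thesis .
    qed
    have e2: "dphi l1 l2 c th (u + 2 * U) = dphi l1 l2 c th u"
    proof -
      have "dphi l1 l2 c th (u + 2 * U) = dphi l1 l2 c th ((u + U) + U)" by (simp only: u2)
      also have "\<dots> = dphi l1 l2 c th (u + U)" unfolding U_def by (rule dphi_per)
      also have "\<dots> = dphi l1 l2 c th u" unfolding U_def by (rule dphi_per)
      finally show ?thesis .
    qed
    have p2: "phi l1 l2 c th (u + 2 * U) = phi l1 l2 c th u + 2 * pi"
      unfolding U_def by (rule phi_per2)
    have e3: "cos (phi l1 l2 c th (u + 2 * U)) = cos (phi l1 l2 c th u)"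
      unfolding p2 by (simp add: cos_add)
    have e4: "sin (phi l1 l2 c th (u + 2 * U)) = sin (phi l1 l2 c th u)"
      unfolding p2 by (simp add: sin_add)
    have f2: "ffun l1 l2 c th (u + 2 * U) = ffun l1 l2 c th u + 2 * fU"
    proof -
      have "ffun l1 l2 c th (u + 2 * U) = ffun l1 l2 c th ((u + U) + U)" by (simp only: u2)
      also have "\<dots> = ffun l1 l2 c th (u + U) + fU" unfolding U_def fU_def by (rule ffun_per)
      also have "\<dots> = ffun l1 l2 c th u + fU + fU" unfolding U_def fU_def by (simp only: ffun_per)
      finally show ?thesis by simp
    qed
    have g2: "Gfun l1 l2 c th (u + 2 * U) = Gfun l1 l2 c th u + 2 * GU"
    proof -
      have "Gfun l1 l2 c th (u + 2 * U) = Gfun l1 l2 c th ((u + U) + U)" by (simp only: u2)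
      also have "\<dots> = Gfun l1 l2 c th (u + U) + GU" unfolding U_def GU_def by (rule Gfun_per)
      also have "\<dots> = Gfun l1 l2 c th u + GU + GU" unfolding U_def GU_def by (simp only: Gfun_per)
      finally show ?thesis by simp
    qed
    have e5: "- l1 * l2 * Dc c th * (v - 2 * fU / c) + l1 * l2 * Gfun l1 l2 c th (u + 2 * U)
        = - l1 * l2 * Dc c th * v + l1 * l2 * Gfun l1 l2 c th u"
    proof -
      have z: "Dc c th * fU / c + GU = 0" using HU cpos by (simp add: field_simps)
      have "- l1 * l2 * Dc c th * (v - 2 * fU / c) + l1 * l2 * (Gfun l1 l2 c th u + 2 * GU)
          = (- l1 * l2 * Dc c th * v + l1 * l2 * Gfun l1 l2 c th u) + 2 * l1 * l2 * (Dc c th * fU / c + GU)"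
        using cpos by (simp add: field_simps)
      then show ?thesis unfolding g2 z by simp
    qed
    have e6: "ffun l1 l2 c th (u + 2 * U) + c * (v - 2 * fU / c) = ffun l1 l2 c th u + c * v"
      unfolding f2 using cpos by (simp add: algebra_simps)
    have rz: "Re z = u" "Im z = v" by (simp_all add: u_def v_def)
    show ?thesis
      unfolding Xmap_def Let_def r rz unfolding e1 e2 e3 e4 e5 e6 ..
  qed
  moreover have "Z \<noteq> 0" using U0 unfolding Z_def by (simp add: complex_eq_iff)
  ultimately show ?thesis by blast
qed

end

theorem theorem5p2:
  fixes l1 l2 c :: real
  assumes "(l1 > l2 \<and> l2 > 0) \<or> (l1 = 1 \<and> l2 = 1)"
    and "c > 0"
  shows "\<exists>Z::complex. Z \<noteq> 0 \<and>
           (\<forall>z. Xmap l1 l2 c (theta_tilde l1 l2 c) (z + Z) = Xmap l1 l2 c (theta_tilde l1 l2 c) z)"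
proof -
  have l: "0 < l2" "l2 \<le> l1" using assms(1) by auto
  have p: "good l1 l2 c (theta_tilde l1 l2 c)" "Hfun l1 l2 c (theta_tilde l1 l2 c) = 0"
    using theta_tilde_props[OF l assms(2)] by auto
  interpret X: good l1 l2 c "theta_tilde l1 l2 c" by (rule p(1))
  show ?thesis by (rule X.periodic_X[OF p(2)])
qed

end
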